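(* Let $G$ be a finitely generated group, $H$ a finitely generated subgroup, $A$ a finite alphabet, $S\subseteq H$ finite and $\mu:A^S\to A$. Let $\Phi_H:A^H\to A^H$ and $\Phi_G:A^G\to A^G$ be the cellular automata defined by $\Phi_H(x)(h)=\mu(s\mapsto x(hs))$ and $\Phi_G(x)(g)=\mu(s\mapsto x(gs))$. If $\Phi_G$ is sensitive to initial conditions, then so is $\Phi_H$.
   Context: Metrics: fix a finite generating set $E_H$ of $H$ closed under inverses and a finite generating set $D\supseteq E_H$ of $G$ closed under inverses, with word metrics $d_H$, $d_G$. The Cantor metric on $A^H$ is $d^H(x,y)=2^{-k}$ with $k=\min\{d_H(1,h):x(h)\neq y(h)\}$, and on $A^G$ similarly $d^G$ using $d_G$; $B^H$, $B^G$ denote closed balls. A map $\Phi$ on such a space with balls $B$ is sensitive to initial conditions if $\exists\epsilon>0\,\forall x\,\forall\delta>0\,\exists t\in\mathbb{N}\,\exists y\in B(x,\delta)$ with $\Phi^t(y)\notin B(\Phi^t(x),\epsilon)$. (This notion does not depend on the choice of generating sets.) *)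

theory Defs
  imports Complex_Main "HOL-Library.FuncSet"
begin

text \<open>Groups are written additively via the (non-commutative) type class group_add:
  the group operation is +, the identity 0, inverses uminus.\<close>

definition generated_by :: "'g::group_add set \<Rightarrow> 'g set" where
  "generated_by E = {sum_list xs | xs. set xs \<subseteq> E}"

definition word_len :: "'g::group_add set \<Rightarrow> 'g \<Rightarrow> nat" where
  "word_len E g = (LEAST n. \<exists>xs. length xs = n \<and> set xs \<subseteq> E \<and> sum_list xs = g)"

definition cantor_dist :: "'g::group_add set \<Rightarrow> ('g \<Rightarrow> 'a) \<Rightarrow> ('g \<Rightarrow> 'a) \<Rightarrow> real" where
  "cantor_dist E x y =
     (if x = y then 0 else (1/2) ^ (LEAST k. \<exists>h. x h \<noteq> y h \<and> word_len E h = k))"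

definition sensitive :: "('c \<Rightarrow> 'c \<Rightarrow> real) \<Rightarrow> 'c set \<Rightarrow> ('c \<Rightarrow> 'c) \<Rightarrow> bool" where
  "sensitive d X \<Phi> \<longleftrightarrow>
     (\<exists>\<epsilon>>0. \<forall>x\<in>X. \<forall>\<delta>>0. \<exists>t::nat. \<exists>y\<in>X.
        d x y \<le> \<delta> \<and> \<not> d ((\<Phi> ^^ t) x) ((\<Phi> ^^ t) y) \<le> \<epsilon>)"

text \<open>Cellular automaton on A^H (configurations are functions extensional on H)
  and on A^G (G = the whole type), with local rule mu : A^S \<rightarrow> A.\<close>
definition CA_sub :: "'g::group_add set \<Rightarrow> 'g set \<Rightarrow> (('g \<Rightarrow> 'a) \<Rightarrow> 'a) \<Rightarrow> ('g \<Rightarrow> 'a) \<Rightarrow> ('g \<Rightarrow> 'a)" where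
  "CA_sub H S \<mu> x = (\<lambda>h. if h \<in> H then \<mu> (restrict (\<lambda>s. x (h + s)) S) else undefined)"

definition CA_full :: "'g::group_add set \<Rightarrow> (('g \<Rightarrow> 'a) \<Rightarrow> 'a) \<Rightarrow> ('g \<Rightarrow> 'a) \<Rightarrow> ('g \<Rightarrow> 'a)" where
  "CA_full S \<mu> x = (\<lambda>g. \<mu> (restrict (\<lambda>s. x (g + s)) S))"

end

theory Submission
  imports Defs
begin

definition agree :: "'g::group_add set \<Rightarrow> nat \<Rightarrow> ('g \<Rightarrow> 'a) \<Rightarrow> ('g \<Rightarrow> 'a) \<Rightarrow> bool" where
  "agree E n x y \<longleftrightarrow> (\<forall>h. word_len E h < n \<longrightarrow> x h = y h)"

lemma cd_le_iff: "cantor_dist E x y \<le> (1/2) ^ n \<longleftrightarrow> agree E n x y"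
proof (cases "x = y")
  case True
  then show ?thesis by (simp add: cantor_dist_def agree_def)
next
  case False
  define k where "k = (LEAST k. \<exists>h. x h \<noteq> y h \<and> word_len E h = k)"
  have ex: "\<exists>k h. x h \<noteq> y h \<and> word_len E h = k" using False by auto
  have d: "cantor_dist E x y = (1/2) ^ k" using False by (simp add: cantor_dist_def k_def)
  have "(1/2::real) ^ k \<le> (1/2) ^ n \<longleftrightarrow> n \<le> k" by simp
  moreover have "n \<le> k \<longleftrightarrow> agree E n x y"
  proof
    assume "n \<le> k"
    show "agree E n x y" unfolding agree_def
    proof (intro allI impI, rule ccontr)
      fix h assume "word_len E h < n" "x h \<noteq> y h"
      then have "k \<le> word_len E h" unfolding k_def by (auto intro: Least_le)
      with \<open>n \<le> k\<close> \<open>word_len E h < n\<close> show False by simp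
    qed
  next
    assume a: "agree E n x y"
    obtain h where h: "x h \<noteq> y h" "word_len E h = k"
      using LeastI_ex[OF ex] unfolding k_def by blast
    show "n \<le> k" using a h unfolding agree_def by (meson not_le)
  qed
  ultimately show ?thesis using d by simp
qed

lemma sens_to_nat:
  assumes "sensitive (cantor_dist E) X \<Phi>"
  shows "\<exists>N. \<forall>x\<in>X. \<forall>M. \<exists>t. \<exists>y\<in>X. agree E M x y \<and> \<not> agree E N ((\<Phi>^^t) x) ((\<Phi>^^t) y)"
proof -
  obtain \<epsilon> :: real where e: "\<epsilon> > 0" and S: "\<forall>x\<in>X. \<forall>\<delta>>0. \<exists>t::nat. \<exists>y\<in>X.
        cantor_dist E x y \<le> \<delta> \<and> \<not> cantor_dist E ((\<Phi> ^^ t) x) ((\<Phi> ^^ t) y) \<le> \<epsilon>"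
    using assms unfolding sensitive_def by blast
  obtain N where N: "(1/2::real) ^ N < \<epsilon>" using real_arch_pow_inv[OF e, of "1/2"] by auto
  have "\<exists>t. \<exists>y\<in>X. agree E M x y \<and> \<not> agree E N ((\<Phi>^^t) x) ((\<Phi>^^t) y)" if xX: "x \<in> X" for x M
  proof -
    obtain t y where y: "y \<in> X" "cantor_dist E x y \<le> (1/2)^M"
      "\<not> cantor_dist E ((\<Phi> ^^ t) x) ((\<Phi> ^^ t) y) \<le> \<epsilon>"
      using S xX by (meson zero_less_divide_1_iff zero_less_numeral zero_less_power)
    then have "\<not> cantor_dist E ((\<Phi> ^^ t) x) ((\<Phi> ^^ t) y) \<le> (1/2)^N" using N by linarith
    then show ?thesis
      using y by (auto simp: cd_le_iff)
  qed
  then show ?thesis by blast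
qed

lemma nat_to_sens:
  assumes "\<exists>N. \<forall>x\<in>X. \<forall>M. \<exists>t. \<exists>y\<in>X. agree E M x y \<and> \<not> agree E N ((\<Phi>^^t) x) ((\<Phi>^^t) y)"
  shows "sensitive (cantor_dist E) X \<Phi>"
proof -
  obtain N where N: "\<forall>x\<in>X. \<forall>M. \<exists>t. \<exists>y\<in>X. agree E M x y \<and> \<not> agree E N ((\<Phi>^^t) x) ((\<Phi>^^t) y)"
    using assms by blast
  show ?thesis unfolding sensitive_def
  proof (intro exI[of _ "(1/2::real)^N"] conjI ballI allI impI)
    fix x and \<delta> :: real assume "x \<in> X" "\<delta> > 0"
    obtain M where M: "(1/2::real) ^ M < \<delta>" using real_arch_pow_inv[OF \<open>\<delta> > 0\<close>, of "1/2"] by auto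
    obtain t y where "y \<in> X" "agree E M x y" "\<not> agree E N ((\<Phi>^^t) x) ((\<Phi>^^t) y)"
      using N \<open>x \<in> X\<close> by blast
    then show "\<exists>t. \<exists>y\<in>X. cantor_dist E x y \<le> \<delta> \<and> \<not> cantor_dist E ((\<Phi> ^^ t) x) ((\<Phi> ^^ t) y) \<le> (1/2)^N"
      using M by (metis cd_le_iff order.trans less_imp_le)
  qed simp
qed

lemma ball_finite:
  assumes "finite E" "h \<in> generated_by E" "word_len E h < M"
  shows "h \<in> sum_list ` {xs. set xs \<subseteq> E \<and> length xs \<le> M}"
proof -
  have ex: "\<exists>n xs. length xs = n \<and> set xs \<subseteq> E \<and> sum_list xs = h"
    using assms(2) unfolding generated_by_def by auto
  obtain xs where "length xs = word_len E h" "set xs \<subseteq> E" "sum_list xs = h"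
    using LeastI_ex[OF ex] unfolding word_len_def by blast
  then show ?thesis using assms(3) by force
qed

lemma ball_fin:
  assumes "finite E" "A \<subseteq> generated_by E"
  shows "finite {h \<in> A. word_len E h < M}"
proof (rule finite_subset)
  show "{h \<in> A. word_len E h < M} \<subseteq> sum_list ` {xs. set xs \<subseteq> E \<and> length xs \<le> M}"
    using ball_finite[OF assms(1)] assms(2) by blast
  show "finite (sum_list ` {xs. set xs \<subseteq> E \<and> length xs \<le> M})"
    using finite_lists_length_le[OF assms(1)] by blast
qed

definition cls :: "'g::group_add set \<Rightarrow> 'g \<Rightarrow> 'g set" where
  "cls H g = {z. -z + g \<in> H}"

definition rep :: "'g::group_add set \<Rightarrow> 'g \<Rightarrow> 'g" where
  "rep H g = (SOME z. z \<in> cls H g)"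

definition pb :: "'g::group_add set \<Rightarrow> 'g \<Rightarrow> ('g \<Rightarrow> 'a) \<Rightarrow> ('g \<Rightarrow> 'a)" where
  "pb H c y = restrict (\<lambda>h. y (c + h)) H"

locale sgrp =
  fixes H :: "'g::group_add set"
  assumes z: "0 \<in> H" and ad: "\<And>a b. a \<in> H \<Longrightarrow> b \<in> H \<Longrightarrow> a + b \<in> H"
    and neg: "\<And>a. a \<in> H \<Longrightarrow> - a \<in> H"
begin

lemma cls_eq: assumes "-a + b \<in> H" shows "cls H a = cls H b"
proof -
  have "-z + b \<in> H" if "-z + a \<in> H" for z
  proof -
    have "(-z + a) + (-a + b) \<in> H" using ad that assms by blast
    then show ?thesis by (simp add: add.assoc[symmetric])
  qed
  moreover have "-z + a \<in> H" if "-z + b \<in> H" for z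
  proof -
    have "-(-a + b) \<in> H" using neg assms by blast
    then have "(-z + b) + (-(-a + b)) \<in> H" using ad that by blast
    then show ?thesis by (simp add: minus_add add.assoc[symmetric])
  qed
  ultimately show ?thesis unfolding cls_def by blast
qed

lemma rep_in: "-(rep H g) + g \<in> H"
proof -
  have "g \<in> cls H g" using z by (simp add: cls_def)
  then have "rep H g \<in> cls H g" unfolding rep_def by (rule someI)
  then show ?thesis by (simp add: cls_def)
qed

lemma rep_rep: "rep H (rep H g) = rep H g"
  using cls_eq[OF rep_in[of g]] unfolding rep_def by simp

lemma rep_add: assumes "h \<in> H" shows "rep H (c + h) = rep H c"
proof -
  have "-c + (c + h) \<in> H" using assms by (simp add: add.assoc[symmetric])
  then have "cls H c = cls H (c + h)" by (rule cls_eq)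
  then show ?thesis unfolding rep_def by simp
qed

lemma pb_step: assumes "S \<subseteq> H"
  shows "CA_sub H S \<mu> (pb H c z) = pb H c (CA_full S \<mu> z)"
proof
  fix h
  show "CA_sub H S \<mu> (pb H c z) h = pb H c (CA_full S \<mu> z) h"
  proof (cases "h \<in> H")
    case True
    have "restrict (\<lambda>s. pb H c z (h + s)) S = restrict (\<lambda>s. z (c + h + s)) S"
    proof (rule restrict_ext)
      fix s assume "s \<in> S"
      then have "h + s \<in> H" using assms True ad by blast
      then show "pb H c z (h + s) = z (c + h + s)" by (simp add: pb_def add.assoc)
    qed
    then show ?thesis using True by (simp add: CA_sub_def CA_full_def pb_def)
  next
    case False
    then show ?thesis by (simp add: CA_sub_def pb_def)
  qed
qed

lemma pb_iter: assumes "S \<subseteq> H"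
  shows "(CA_sub H S \<mu> ^^ t) (pb H c y) = pb H c ((CA_full S \<mu> ^^ t) y)"
  by (induction t) (simp_all add: pb_step[OF assms])

end

theorem proposition6:
  fixes H E D S :: "'g::group_add set"
    and \<mu> :: "('g \<Rightarrow> 'a::finite) \<Rightarrow> 'a"
  assumes H_subgroup: "0 \<in> H" "\<And>a b. a \<in> H \<Longrightarrow> b \<in> H \<Longrightarrow> a + b \<in> H"
      "\<And>a. a \<in> H \<Longrightarrow> - a \<in> H"
    and E_fin: "finite E" and E_sub: "E \<subseteq> H" and E_inv: "\<And>e. e \<in> E \<Longrightarrow> - e \<in> E"
    and E_gen: "generated_by E = H"
    and D_fin: "finite D" and D_sup: "E \<subseteq> D" and D_inv: "\<And>e. e \<in> D \<Longrightarrow> - e \<in> D"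
    and D_gen: "generated_by D = UNIV"
    and S_fin: "finite S" and S_sub: "S \<subseteq> H"
    and sensG: "sensitive (cantor_dist D) UNIV (CA_full S \<mu>)"
  shows "sensitive (cantor_dist E) (extensional H) (CA_sub H S \<mu>)"
proof -
  interpret sgrp H using H_subgroup by unfold_locales auto
  let ?\<Phi> = "CA_full S \<mu>"
  let ?\<Psi> = "CA_sub H S \<mu>"
  obtain NG where NG: "\<forall>x\<in>UNIV. \<forall>M. \<exists>t. \<exists>y\<in>UNIV. agree D M x y \<and> \<not> agree D NG ((?\<Phi>^^t) x) ((?\<Phi>^^t) y)"
    using sens_to_nat[OF sensG] by blast
  show ?thesis
  proof (rule nat_to_sens, rule ccontr)
    assume neg: "\<not> (\<exists>N. \<forall>x\<in>extensional H. \<forall>M. \<exists>t. \<exists>y\<in>extensional H. agree E M x y \<and> \<not> agree E N ((?\<Psi>^^t) x) ((?\<Psi>^^t) y))"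
    define BG where "BG = {g\<in>UNIV. word_len D g < NG}"
    have finBG: "finite BG" unfolding BG_def using ball_fin[OF D_fin, of UNIV] D_gen by simp
    define Hs where "Hs = (\<lambda>g. -rep H g + g) ` BG"
    have finHs: "finite Hs" using finBG by (simp add: Hs_def)
    define NH where "NH = Suc (Max (word_len E ` Hs))"
    from neg have "\<forall>N. \<exists>x\<in>extensional H. \<exists>M. \<forall>t. \<forall>y\<in>extensional H. agree E M x y \<longrightarrow> agree E N ((?\<Psi>^^t) x) ((?\<Psi>^^t) y)"
      by simp
    then have "\<exists>x\<in>extensional H. \<exists>M. \<forall>t. \<forall>y\<in>extensional H. agree E M x y \<longrightarrow> agree E NH ((?\<Psi>^^t) x) ((?\<Psi>^^t) y)"
      by (rule spec)
    then obtain xH M where xH: "xH \<in> extensional H"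
      and stab: "\<And>t y. y \<in> extensional H \<Longrightarrow> agree E M xH y \<Longrightarrow> agree E NH ((?\<Psi>^^t) xH) ((?\<Psi>^^t) y)"
      by blast
    define BH where "BH = {h\<in>H. word_len E h < M}"
    have finBH: "finite BH" unfolding BH_def using ball_fin[OF E_fin, of H] E_gen by simp
    define C where "C = rep H ` BG"
    define F where "F = (\<lambda>(c,h). c + h) ` (C \<times> BH)"
    have finF: "finite F" using finBG finBH by (simp add: F_def C_def)
    define K where "K = Suc (Max (word_len D ` F))"
    define x where "x = (\<lambda>g. xH (-rep H g + g))"
    obtain t y where y: "agree D K x y" "\<not> agree D NG ((?\<Phi>^^t) x) ((?\<Phi>^^t) y)"
      using NG by blast
    have "agree D NG ((?\<Phi>^^t) x) ((?\<Phi>^^t) y)"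
      unfolding agree_def
    proof (intro allI impI)
      fix g assume "word_len D g < NG"
      then have gBG: "g \<in> BG" by (simp add: BG_def)
      define c where "c = rep H g"
      define h where "h = -c + g"
      have hH: "h \<in> H" unfolding h_def c_def by (rule rep_in)
      have "h \<in> Hs" unfolding Hs_def h_def c_def using gBG by blast
      then have "word_len E h \<le> Max (word_len E ` Hs)" using finHs by simp
      then have hNH: "word_len E h < NH" unfolding NH_def by simp
      have cC: "c \<in> C" unfolding C_def c_def using gBG by blast
      have pbx: "pb H c x = xH"
      proof
        fix z
        show "pb H c x z = xH z"
        proof (cases "z \<in> H")
          case True
          have "rep H (c + z) = c" using rep_add[OF True] rep_rep c_def by simp
          then show ?thesis using True by (simp add: pb_def x_def add.assoc[symmetric])
        next
          case False
          have "xH z = undefined" using xH False by (rule extensional_arb)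
          then show ?thesis using False unfolding pb_def restrict_def by simp
        qed
      qed
      have ag: "agree E M xH (pb H c y)"
        unfolding agree_def
      proof (intro allI impI)
        fix z assume zM: "word_len E z < M"
        show "xH z = pb H c y z"
        proof (cases "z \<in> H")
          case True
          then have "z \<in> BH" using zM by (simp add: BH_def)
          then have "c + z \<in> F" using cC unfolding F_def by force
          then have "word_len D (c + z) \<le> Max (word_len D ` F)" using finF by simp
          then have "word_len D (c + z) < K" unfolding K_def by simp
          then have "x (c + z) = y (c + z)" using y(1) by (simp add: agree_def)
          moreover have "pb H c x z = xH z" using pbx by simp
          ultimately show ?thesis using True by (simp add: pb_def)
        next
          case False
          have "xH z = undefined" using xH False by (rule extensional_arb)
          then show ?thesis using False unfolding pb_def restrict_def by simp
        qed
      qed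
      have "pb H c y \<in> extensional H" by (simp add: pb_def)
      from stab[OF this ag, of t]
      have "agree E NH (pb H c ((?\<Phi>^^t) x)) (pb H c ((?\<Phi>^^t) y))"
        unfolding pb_iter[OF S_sub, symmetric] pbx .
      then have "pb H c ((?\<Phi>^^t) x) h = pb H c ((?\<Phi>^^t) y) h"
        using hNH by (simp add: agree_def)
      then have "(?\<Phi>^^t) x (c + h) = (?\<Phi>^^t) y (c + h)" using hH by (simp add: pb_def)
      moreover have "c + h = g" by (simp add: h_def add.assoc[symmetric])
      ultimately show "(?\<Phi>^^t) x g = (?\<Phi>^^t) y g" by simp
    qed
    with y(2) show False by blast
  qed
qed

end
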